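(* For $n\in\mathbb Z_{>0}$, the differential algebra map $\mathrm{Pr}^{PV}_n:\mathcal W(\mathfrak{gl}_{T=n})\to\mathcal W^{Adl}(\mathfrak{gl}_n)$ defined by $\mathrm{Pr}^{PV}_n(u_{-n+i,T=n})=u_{-n+i}$ for $0\le i\le n-1$ and $\mathrm{Pr}^{PV}_n(u_{-n+i,T=n})=0$ for $i\ge n$ is a surjective morphism of Poisson vertex algebras. Moreover, let $\mathrm{Inv}^{PV}_n:\mathcal W^{Adl}(\mathfrak{gl}_n)\to\mathcal W(\mathfrak{gl}_{T=n})$ be the differential algebra section $u_{-n+i}\mapsto u_{-n+i,T=n}$; then for fixed $i_0,j_0\in\mathbb Z_{\ge0}$ and all sufficiently large $n$, $$\mathrm{Inv}^{PV}_n(\{u_{-n+i_0\,\lambda}u_{-n+j_0}\})=\{u_{-n+i_0,T=n\,\lambda}u_{-n+j_0,T=n}\}.$$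
   Context: Pseudodifferential symbols over a differential algebra: $\sum_{m\le N}a_m\partial^{\beta+m}$ multiplied via $\partial^{\beta_1+k}\circ(a\partial^{\beta_2+m})=\sum_{j\ge0}\binom{\beta_1+k}{j}\partial^j(a)\partial^{\beta_1+\beta_2+k+m-j}$. For monic $L=\partial^\beta+\sum_{i\in I_\beta}w_i\partial^{-1-i}$, $I_\beta=\{-\beta+k:k\ge0\}$, set $H^{(L)}_{ij}(\partial)f=\mathrm{Res}_\partial\big(((L\partial^if)_+L-L(\partial^ifL)_+)\circ\partial^j\big)$ ($(\cdot)_+$ nonnegative-power part, $\mathrm{Res}_\partial$ coefficient of $\partial^{-1}$); $L$ is of Adler type if $\{w_{i\,\lambda}w_j\}=H^{(L)}_{ji}(\lambda)$. $\mathcal W(\mathfrak{gl}_{T=n})$ is the differential polynomial algebra over $\mathbb C$ in $u_{-n+i,T=n}$, $i\ge0$, with the PVA structure making $L_{T=n}=\partial^n+\sum_{i\ge0}u_{-n+i,T=n}\partial^{n-1-i}$ (a pseudodifferential symbol) of Adler type. $\mathcal W^{Adl}(\mathfrak{gl}_n)$ is the differential polynomial algebra in $u_{-n},\dots,u_{-1}$ with the PVA structure making the differential operator $L_n=\partial^n+u_{-n}\partial^{n-1}+\dots+u_{-1}$ of Adler type (the classical $\mathcal W$-algebra of $\mathfrak{gl}_n$ with the second Adler–Gelfand–Dickey bracket). *)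

theory Defs
  imports Complex_Main "HOL-Library.Poly_Mapping" "HOL-Computational_Algebra.Polynomial"
begin

text \<open>Variables: U i m stands for the m-th derivative of the generator u_{-n+i}
  (resp. u_{-n+i,T=n}); F m stands for the m-th derivative of an auxiliary
  test function f, used only to read off the symbol of the differential
  operator H(\<partial>).\<close>

datatype var = U nat nat | F nat

type_synonym dpoly = "(var \<Rightarrow>\<^sub>0 nat) \<Rightarrow>\<^sub>0 complex"

fun dvar :: "var \<Rightarrow> var" where
  "dvar (U i m) = U i (Suc m)"
| "dvar (F m) = F (Suc m)"

definition Var :: "var \<Rightarrow> dpoly" where
  "Var v = Poly_Mapping.single (Poly_Mapping.single v 1) 1"

definition cst :: "complex \<Rightarrow> dpoly" where
  "cst c = Poly_Mapping.single 0 c"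

definition dd :: "dpoly \<Rightarrow> dpoly" where
  "dd p = (\<Sum>mon\<in>Poly_Mapping.keys p. \<Sum>v\<in>Poly_Mapping.keys mon.
      Poly_Mapping.single (mon - Poly_Mapping.single v 1 + Poly_Mapping.single (dvar v) 1)
        (Poly_Mapping.lookup p mon * of_nat (Poly_Mapping.lookup mon v)))"

definition polys_in :: "var set \<Rightarrow> dpoly set" where
  "polys_in S = {p. \<forall>mon\<in>Poly_Mapping.keys p. Poly_Mapping.keys mon \<subseteq> S}"

text \<open>W(gl_{T=n}): differential polynomials in u_{-n+i,T=n}, i \<ge> 0.\<close>
definition WT :: "dpoly set" where
  "WT = polys_in {U i m | i m. True}"

text \<open>W^{Adl}(gl_n): differential polynomials in u_{-n},...,u_{-1}.\<close>
definition WA :: "nat \<Rightarrow> dpoly set" where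
  "WA n = polys_in {U i m | i m. i < n}"

text \<open>A symbol \<Sum>_{k \<le> N} a_k \<partial>^k is represented by its coefficient function.\<close>

definition is_symbol :: "(int \<Rightarrow> 'a::zero) \<Rightarrow> bool" where
  "is_symbol A \<longleftrightarrow> (\<exists>N. \<forall>k>N. A k = 0)"

definition sbound :: "(int \<Rightarrow> 'a::zero) \<Rightarrow> int" where
  "sbound A = (SOME N. \<forall>k>N. A k = 0)"

definition ibinom :: "int \<Rightarrow> nat \<Rightarrow> int" where
  "ibinom k j = (if k \<ge> 0 then int (nat k choose j)
                 else (-1) ^ j * int ((nat (- k) + j - 1) choose j))"

text \<open>Product of symbols: \<partial>^k \<circ> (b \<partial>^m) = \<Sum>_{j\<ge>0} binom(k,j) \<partial>^j(b) \<partial>^{k+m-j};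
  the coefficient of \<partial>^p is a finite sum (all other terms vanish).\<close>
definition smul :: "('a \<Rightarrow> 'a) \<Rightarrow> (int \<Rightarrow> 'a::comm_ring_1) \<Rightarrow> (int \<Rightarrow> 'a) \<Rightarrow> int \<Rightarrow> 'a" where
  "smul d A B p = (\<Sum>k\<in>{p - sbound B..sbound A}. \<Sum>j\<in>{0..nat (sbound A + sbound B - p)}.
       of_int (ibinom k j) * A k * (d ^^ j) (B (p + int j - k)))"

definition splus :: "(int \<Rightarrow> 'a::zero) \<Rightarrow> int \<Rightarrow> 'a" where
  "splus A = (\<lambda>k. if k \<ge> 0 then A k else 0)"

definition sres :: "(int \<Rightarrow> 'a) \<Rightarrow> 'a" where
  "sres A = A (-1)"

definition spow :: "int \<Rightarrow> int \<Rightarrow> 'a::{zero,one}" where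
  "spow i = (\<lambda>k. if k = i then 1 else 0)"

definition sconst :: "'a \<Rightarrow> int \<Rightarrow> 'a::zero" where
  "sconst a = (\<lambda>k. if k = 0 then a else 0)"

text \<open>Monic symbol \<partial>^n + \<Sum>_{k\<ge>0} w_{-n+k} \<partial>^{n-1-k}; here w k stands for w_{-n+k}.\<close>
definition monic_sym :: "nat \<Rightarrow> (nat \<Rightarrow> dpoly) \<Rightarrow> int \<Rightarrow> dpoly" where
  "monic_sym n w = (\<lambda>k. if k = int n then 1
                         else if k < int n then w (nat (int n - 1 - k)) else 0)"

text \<open>H^{(L)}_{ij}(\<partial>) f = Res(((L\<partial>^i f)_+ L - L(\<partial>^i f L)_+) \<circ> \<partial>^j).\<close>
definition Hop :: "(int \<Rightarrow> dpoly) \<Rightarrow> int \<Rightarrow> int \<Rightarrow> dpoly \<Rightarrow> dpoly" where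
  "Hop L i j f = sres (smul dd
      (smul dd (splus (smul dd (smul dd L (spow i)) (sconst f))) L
       - smul dd L (splus (smul dd (smul dd (spow i) (sconst f)) L)))
      (spow j))"

text \<open>Coefficient of f^{(m)} in an expression that is linear in f.\<close>
definition fcoeff :: "nat \<Rightarrow> dpoly \<Rightarrow> dpoly" where
  "fcoeff m X = Abs_poly_mapping (\<lambda>mon.
      if (\<forall>k. F k \<notin> Poly_Mapping.keys mon)
      then Poly_Mapping.lookup X (mon + Poly_Mapping.single (F m) 1) else 0)"

definition Fords :: "dpoly \<Rightarrow> nat set" where
  "Fords X = {m. \<exists>mon\<in>Poly_Mapping.keys X. F m \<in> Poly_Mapping.keys mon}"

text \<open>The symbol H(\<lambda>) = \<Sum>_m h_m \<lambda>^m of the differential operator H(\<partial>) = \<Sum>_m h_m \<partial>^m.\<close>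
definition Hsym :: "(int \<Rightarrow> dpoly) \<Rightarrow> int \<Rightarrow> int \<Rightarrow> dpoly poly" where
  "Hsym L i j = (let X = Hop L i j (Var (F 0)) in
      \<Sum>m\<in>Fords X. monom (fcoeff m X) m)"

text \<open>(\<lambda>+\<partial>) and (-\<lambda>-\<partial>) acting on A[\<lambda>], \<partial> acting on the coefficients.\<close>
definition lpd :: "dpoly poly \<Rightarrow> dpoly poly" where
  "lpd P = pCons 0 P + map_poly dd P"

definition nlpd :: "dpoly poly \<Rightarrow> dpoly poly" where
  "nlpd P = - lpd P"

text \<open>{a_{\<lambda>+\<partial>} c}_\<rightarrow> b where P = {a_\<lambda> c}.\<close>
definition app_right :: "dpoly poly \<Rightarrow> dpoly \<Rightarrow> dpoly poly" where
  "app_right P b = (\<Sum>k\<le>degree P. smult (coeff P k) ((lpd ^^ k) [:b:]))"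

text \<open>{a_{-\<lambda>-\<partial>} b} where P = {a_\<lambda> b} (\<partial> acting on the coefficients).\<close>
definition skew_sub :: "dpoly poly \<Rightarrow> dpoly poly" where
  "skew_sub P = (\<Sum>k\<le>degree P. (nlpd ^^ k) [:coeff P k:])"

text \<open>Elements of A[\<lambda>][\<mu>]: outer variable \<mu>, inner variable \<lambda>.\<close>
definition br2 :: "(dpoly \<Rightarrow> dpoly \<Rightarrow> dpoly poly) \<Rightarrow> dpoly \<Rightarrow> dpoly poly \<Rightarrow> dpoly poly poly" where
  "br2 br a P = (\<Sum>k\<le>degree P. monom (br a (coeff P k)) k)"

definition swap_vars :: "dpoly poly poly \<Rightarrow> dpoly poly poly" where
  "swap_vars Q = (\<Sum>i\<le>degree Q. \<Sum>j\<le>degree (coeff Q i).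
       monom (monom (coeff (coeff Q i) j) i) j)"

text \<open>{{a_\<lambda> b}_{\<lambda>+\<mu>} c} with P = {a_\<lambda> b}.\<close>
definition jac_rhs :: "(dpoly \<Rightarrow> dpoly \<Rightarrow> dpoly poly) \<Rightarrow> dpoly poly \<Rightarrow> dpoly \<Rightarrow> dpoly poly poly" where
  "jac_rhs br P c = (\<Sum>k\<le>degree P. \<Sum>l\<le>degree (br (coeff P k) c).
      [:[:coeff (br (coeff P k) c) l:]:] * [:[:0, 1:]:] ^ k * ([:[:0, 1:]:] + [:0, 1:]) ^ l)"

definition is_PVA :: "dpoly set \<Rightarrow> (dpoly \<Rightarrow> dpoly \<Rightarrow> dpoly poly) \<Rightarrow> bool" where
  "is_PVA S br \<longleftrightarrow>
     (\<forall>a\<in>S. \<forall>b\<in>S. \<forall>k. coeff (br a b) k \<in> S) \<and>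
     (\<forall>a\<in>S. \<forall>b\<in>S. \<forall>c\<in>S. br (a + b) c = br a c + br b c) \<and>
     (\<forall>a\<in>S. \<forall>b\<in>S. \<forall>c\<in>S. br a (b + c) = br a b + br a c) \<and>
     (\<forall>a\<in>S. \<forall>b\<in>S. \<forall>z. br (cst z * a) b = smult (cst z) (br a b)) \<and>
     (\<forall>a\<in>S. \<forall>b\<in>S. \<forall>z. br a (cst z * b) = smult (cst z) (br a b)) \<and>
     (\<forall>a\<in>S. \<forall>b\<in>S. br (dd a) b = - pCons 0 (br a b)) \<and>
     (\<forall>a\<in>S. \<forall>b\<in>S. br a (dd b) = lpd (br a b)) \<and>
     (\<forall>a\<in>S. \<forall>b\<in>S. \<forall>c\<in>S. br a (b * c) = smult c (br a b) + smult b (br a c)) \<and>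
     (\<forall>a\<in>S. \<forall>b\<in>S. \<forall>c\<in>S. br (a * b) c = app_right (br a c) b + app_right (br b c) a) \<and>
     (\<forall>a\<in>S. \<forall>b\<in>S. br b a = - skew_sub (br a b)) \<and>
     (\<forall>a\<in>S. \<forall>b\<in>S. \<forall>c\<in>S.
        br2 br a (br b c) - swap_vars (br2 br b (br a c)) = jac_rhs br (br a b) c)"

text \<open>L = \<partial>^n + \<Sum> w_{-n+k} \<partial>^{n-1-k} is of Adler type for br:
  {w_{i \<lambda>} w_j} = H^{(L)}_{ji}(\<lambda>) for all i, j \<in> I_n, where i = -n+a, j = -n+b.\<close>
definition adler_type :: "(dpoly \<Rightarrow> dpoly \<Rightarrow> dpoly poly) \<Rightarrow> nat \<Rightarrow> (nat \<Rightarrow> dpoly) \<Rightarrow> bool" where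
  "adler_type br n w \<longleftrightarrow>
     (\<forall>a b. br (w a) (w b) = Hsym (monic_sym n w) (int b - int n) (int a - int n))"

text \<open>Generators: for W(gl_{T=n}), w_{-n+k} = u_{-n+k,T=n}; for W^{Adl}(gl_n),
  w_{-n+k} = u_{-n+k} for k < n and 0 otherwise (L_n is a differential operator).\<close>
definition wT :: "nat \<Rightarrow> dpoly" where
  "wT k = Var (U k 0)"

definition wA :: "nat \<Rightarrow> nat \<Rightarrow> dpoly" where
  "wA n k = (if k < n then Var (U k 0) else 0)"

definition PrPV :: "nat \<Rightarrow> dpoly \<Rightarrow> dpoly" where
  "PrPV n p = Abs_poly_mapping (\<lambda>mon.
      if (\<forall>i m. U i m \<in> Poly_Mapping.keys mon \<longrightarrow> i < n) then Poly_Mapping.lookup p mon else 0)"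

text \<open>Inv^{PV}_n: the section u_{-n+i}^{(m)} \<mapsto> u_{-n+i,T=n}^{(m)} (an inclusion in this model).\<close>
definition InvPV :: "nat \<Rightarrow> dpoly \<Rightarrow> dpoly" where
  "InvPV n p = p"

end

theory Submission
  imports Defs
begin

definition goodn :: "nat \<Rightarrow> (var \<Rightarrow>\<^sub>0 nat) \<Rightarrow> bool" where
  "goodn n mon \<longleftrightarrow> (\<forall>i m. U i m \<in> Poly_Mapping.keys mon \<longrightarrow> i < n)"

lemma Pr_lookup: "Poly_Mapping.lookup (PrPV n p) mon = (if goodn n mon then Poly_Mapping.lookup p mon else 0)"
proof -
  have "finite {mon. (if goodn n mon then Poly_Mapping.lookup p mon else 0) \<noteq> 0}"
    by (rule finite_subset[OF _ finite_lookup[of p]]) auto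
  then show ?thesis unfolding PrPV_def goodn_def by simp
qed

lemma Pr_add: "PrPV n (a + b) = PrPV n a + PrPV n b"
  by (rule poly_mapping_eqI) (simp add: Pr_lookup lookup_add)
lemma Pr_uminus: "PrPV n (- a) = - PrPV n a"
  by (rule poly_mapping_eqI) (simp add: Pr_lookup)
lemma Pr_diff: "PrPV n (a - b) = PrPV n a - PrPV n b"
  by (rule poly_mapping_eqI) (simp add: Pr_lookup lookup_minus)
lemma Pr_zero[simp]: "PrPV n 0 = 0"
  by (rule poly_mapping_eqI) (simp add: Pr_lookup)
lemma Pr_sum: "PrPV n (sum f A) = (\<Sum>x\<in>A. PrPV n (f x))"
  by (induction A rule: infinite_finite_induct) (auto simp: Pr_add)

lemma Pr_single: "PrPV n (Poly_Mapping.single m c) = (if goodn n m then Poly_Mapping.single m c else 0)"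
  by (rule poly_mapping_eqI) (simp add: Pr_lookup lookup_single when_def)

lemma keys_add_nat: "Poly_Mapping.keys (a + b :: 'x \<Rightarrow>\<^sub>0 nat) = Poly_Mapping.keys a \<union> Poly_Mapping.keys b"
  by (auto simp: in_keys_iff lookup_add)

lemma goodn_add[simp]: "goodn n (a + b) \<longleftrightarrow> goodn n a \<and> goodn n b"
  by (auto simp: goodn_def keys_add_nat)

lemma goodn_zero[simp]: "goodn n 0"
  by (simp add: goodn_def)

lemma sum_singles: "p = (\<Sum>m\<in>Poly_Mapping.keys p. Poly_Mapping.single m (Poly_Mapping.lookup p m))"
proof (rule poly_mapping_eqI)
  fix k
  show "Poly_Mapping.lookup p k = Poly_Mapping.lookup (\<Sum>m\<in>Poly_Mapping.keys p. Poly_Mapping.single m (Poly_Mapping.lookup p m)) k"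
    by (simp add: lookup_sum lookup_single when_def in_keys_iff)
qed

lemma Pr_mult: "PrPV n (a * b) = PrPV n a * PrPV n b"
proof -
  have "a * b = (\<Sum>m\<in>Poly_Mapping.keys a. \<Sum>m'\<in>Poly_Mapping.keys b.
          Poly_Mapping.single m (Poly_Mapping.lookup a m) * Poly_Mapping.single m' (Poly_Mapping.lookup b m'))"
    by (subst sum_singles[of a], subst sum_singles[of b]) (simp add: sum_product)
  moreover have "PrPV n a * PrPV n b = (\<Sum>m\<in>Poly_Mapping.keys a. \<Sum>m'\<in>Poly_Mapping.keys b.
          PrPV n (Poly_Mapping.single m (Poly_Mapping.lookup a m)) * PrPV n (Poly_Mapping.single m' (Poly_Mapping.lookup b m')))"
    by (subst sum_singles[of a], subst sum_singles[of b]) (simp add: sum_product Pr_sum)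
  ultimately show ?thesis
    by (auto simp: Pr_sum mult_single Pr_single intro!: sum.cong)
qed

lemma Pr_one[simp]: "PrPV n 1 = 1"
  by (rule poly_mapping_eqI) (simp add: Pr_lookup lookup_one when_def)

lemma Pr_cst[simp]: "PrPV n (cst z) = cst z"
  unfolding cst_def by (simp add: Pr_single)


definition ddterm :: "(var \<Rightarrow>\<^sub>0 nat) \<Rightarrow> complex \<Rightarrow> dpoly" where
  "ddterm mon c = (\<Sum>v\<in>Poly_Mapping.keys mon.
      Poly_Mapping.single (mon - Poly_Mapping.single v 1 + Poly_Mapping.single (dvar v) 1)
        (c * of_nat (Poly_Mapping.lookup mon v)))"

lemma ddterm_zero[simp]: "ddterm mon 0 = 0"
  by (simp add: ddterm_def)

lemma ddterm_add: "ddterm mon (a + b) = ddterm mon a + ddterm mon b"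
  by (simp add: ddterm_def distrib_right single_add sum.distrib)

lemma ddterm_uminus: "ddterm mon (- a) = - ddterm mon a"
  by (simp add: ddterm_def single_uminus sum_negf)

lemma dd_K: "finite K \<Longrightarrow> Poly_Mapping.keys p \<subseteq> K \<Longrightarrow>
   dd p = (\<Sum>mon\<in>K. ddterm mon (Poly_Mapping.lookup p mon))"
  unfolding dd_def ddterm_def
  by (rule sum.mono_neutral_left) (auto simp: in_keys_iff)

lemma dd_add: "dd (p + q) = dd p + dd q"
proof -
  let ?K = "Poly_Mapping.keys p \<union> Poly_Mapping.keys q"
  have k: "Poly_Mapping.keys (p + q) \<subseteq> ?K" by (rule keys_add)
  show ?thesis
    by (simp add: dd_K[OF _ k] dd_K[of ?K p] dd_K[of ?K q] lookup_add ddterm_add sum.distrib)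
qed

lemma dd_zero[simp]: "dd 0 = 0"
  by (simp add: dd_def)

lemma dd_uminus: "dd (- p) = - dd p"
  using dd_add[of p "-p"] by (simp add: add_eq_0_iff2)

lemma dd_diff: "dd (p - q) = dd p - dd q"
  using dd_add[of p "-q"] by (simp add: dd_uminus)

lemma dd_sum: "dd (sum f A) = (\<Sum>x\<in>A. dd (f x))"
  by (induction A rule: infinite_finite_induct) (auto simp: dd_add)

lemma dd_single: "dd (Poly_Mapping.single m c) = ddterm m c"
  by (subst dd_K[of "{m}"]) (auto simp: lookup_single)

lemma dd_Var: "dd (Var v) = Var (dvar v)"
  by (simp add: Var_def dd_single ddterm_def)

lemma dvar_U: "dvar v = U i k \<Longrightarrow> v = U i (k - 1) \<and> k > 0"
  by (cases v) auto

lemma goodn_shift: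
  assumes "v \<in> Poly_Mapping.keys m"
  shows "goodn n (m - Poly_Mapping.single v 1 + Poly_Mapping.single (dvar v) 1) \<longleftrightarrow> goodn n m"
proof
  assume g: "goodn n m"
  show "goodn n (m - Poly_Mapping.single v 1 + Poly_Mapping.single (dvar v) 1)"
    unfolding goodn_def
  proof (intro allI impI)
    fix i k assume "U i k \<in> Poly_Mapping.keys (m - Poly_Mapping.single v 1 + Poly_Mapping.single (dvar v) 1)"
    then have "U i k \<in> Poly_Mapping.keys m \<or> U i k = dvar v"
      by (auto simp: in_keys_iff lookup_add lookup_minus lookup_single when_def split: if_splits)
    then show "i < n"
    proof
      assume "U i k \<in> Poly_Mapping.keys m" then show ?thesis using g by (auto simp: goodn_def)
    next
      assume "U i k = dvar v"
      then have "v = U i (k - 1)" using dvar_U by metis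
      then show ?thesis using g assms by (auto simp: goodn_def)
    qed
  qed
next
  assume g: "goodn n (m - Poly_Mapping.single v 1 + Poly_Mapping.single (dvar v) 1)"
  show "goodn n m" unfolding goodn_def
  proof (intro allI impI)
    fix i k assume ik: "U i k \<in> Poly_Mapping.keys m"
    show "i < n"
    proof (cases "v = U i k")
      case True
      then have "dvar v = U i (Suc k)" by simp
      moreover have "dvar v \<noteq> v" by (cases v) auto
      ultimately have "U i (Suc k) \<in> Poly_Mapping.keys (m - Poly_Mapping.single v 1 + Poly_Mapping.single (dvar v) 1)"
        by (auto simp: in_keys_iff lookup_add lookup_minus lookup_single when_def)
      then show ?thesis using g by (auto simp: goodn_def)
    next
      case False
      then have "U i k \<in> Poly_Mapping.keys (m - Poly_Mapping.single v 1 + Poly_Mapping.single (dvar v) 1)"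
        using ik by (auto simp: in_keys_iff lookup_add lookup_minus lookup_single when_def)
      then show ?thesis using g by (auto simp: goodn_def)
    qed
  qed
qed

lemma goodn_shift':
  assumes "v \<in> Poly_Mapping.keys m"
  shows "goodn n (m - Poly_Mapping.single v (Suc 0) + Poly_Mapping.single (dvar v) (Suc 0)) \<longleftrightarrow> goodn n m"
  using goodn_shift[OF assms] by simp

lemma Pr_dd_single: "PrPV n (dd (Poly_Mapping.single m c)) = dd (PrPV n (Poly_Mapping.single m c))"
proof (cases "goodn n m")
  case True
  then show ?thesis
    by (auto simp del: goodn_add simp: dd_single ddterm_def Pr_sum Pr_single goodn_shift' intro!: sum.cong)
next
  case False
  then show ?thesis
    by (auto simp del: goodn_add simp: dd_single ddterm_def Pr_sum Pr_single goodn_shift' intro!: sum.neutral)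
qed

lemma Pr_dd: "PrPV n (dd p) = dd (PrPV n p)"
  by (subst (1 2) sum_singles[of p]) (simp add: dd_sum Pr_sum Pr_dd_single)


lemma polys_in_iff: "p \<in> polys_in S \<longleftrightarrow> (\<forall>mon\<in>Poly_Mapping.keys p. Poly_Mapping.keys mon \<subseteq> S)"
  by (simp add: polys_in_def)

lemma polys_in_zero[simp]: "0 \<in> polys_in S"
  by (simp add: polys_in_iff)
lemma polys_in_one[simp]: "1 \<in> polys_in S"
  by (simp add: polys_in_iff)
lemma polys_in_cst[simp]: "cst z \<in> polys_in S"
  by (simp add: polys_in_iff cst_def)
lemma polys_in_Var: "v \<in> S \<Longrightarrow> Var v \<in> polys_in S"
  by (simp add: polys_in_iff Var_def)
lemma polys_in_add: "a \<in> polys_in S \<Longrightarrow> b \<in> polys_in S \<Longrightarrow> a + b \<in> polys_in S"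
  using keys_add[of a b] by (auto simp: polys_in_iff)
lemma polys_in_uminus: "a \<in> polys_in S \<Longrightarrow> - a \<in> polys_in S"
  by (auto simp: polys_in_iff)
lemma polys_in_mult: "a \<in> polys_in S \<Longrightarrow> b \<in> polys_in S \<Longrightarrow> a * b \<in> polys_in S"
  using keys_mult[of a b] by (fastforce simp: polys_in_iff keys_add_nat)
lemma polys_in_sum: "(\<And>x. x \<in> A \<Longrightarrow> f x \<in> polys_in S) \<Longrightarrow> sum f A \<in> polys_in S"
  by (induction A rule: infinite_finite_induct) (auto intro: polys_in_add)

lemma polys_in_dd:
  assumes "p \<in> polys_in S" "\<And>v. v \<in> S \<Longrightarrow> dvar v \<in> S"
  shows "dd p \<in> polys_in S"
proof -
  have "dd p = (\<Sum>mon\<in>Poly_Mapping.keys p. ddterm mon (Poly_Mapping.lookup p mon))"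
    by (rule dd_K) auto
  moreover have "ddterm mon c \<in> polys_in S" if "mon \<in> Poly_Mapping.keys p" for mon c
    unfolding ddterm_def
  proof (rule polys_in_sum)
    fix v assume v: "v \<in> Poly_Mapping.keys mon"
    have ms: "Poly_Mapping.keys mon \<subseteq> S" using assms(1) that by (auto simp: polys_in_iff)
    have "Poly_Mapping.keys (mon - Poly_Mapping.single v 1 + Poly_Mapping.single (dvar v) 1) \<subseteq> S"
    proof
      fix x assume "x \<in> Poly_Mapping.keys (mon - Poly_Mapping.single v 1 + Poly_Mapping.single (dvar v) 1)"
      then have "x \<in> Poly_Mapping.keys mon \<or> x = dvar v"
        by (auto simp: in_keys_iff lookup_add lookup_minus lookup_single when_def split: if_splits)
      then show "x \<in> S" using ms v assms(2) by auto
    qed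
    then show "Poly_Mapping.single (mon - Poly_Mapping.single v 1 + Poly_Mapping.single (dvar v) 1)
        (c * of_nat (Poly_Mapping.lookup mon v)) \<in> polys_in S"
      by (simp add: polys_in_iff)
  qed
  ultimately show ?thesis by (auto intro: polys_in_sum)
qed

lemma single_single_pow: "Poly_Mapping.single (Poly_Mapping.single v k) (1::complex) = Var v ^ k"
proof (induction k)
  case 0 then show ?case by simp
next
  case (Suc k)
  have "Poly_Mapping.single (Poly_Mapping.single v (Suc k)) (1::complex)
      = Poly_Mapping.single (Poly_Mapping.single v 1 + Poly_Mapping.single v k) 1"
    by (simp add: single_add[symmetric])
  also have "\<dots> = Var v * Poly_Mapping.single (Poly_Mapping.single v k) 1" by (simp add: mult_single Var_def)
  also have "\<dots> = Var v * Var v ^ k" by (simp add: Suc)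
  finally show ?case by simp
qed

lemma polys_in_induct[consumes 1, case_names one Var cst add mult]:
  assumes p: "p \<in> polys_in S"
    and one: "P 1"
    and var: "\<And>v. v \<in> S \<Longrightarrow> P (Var v)"
    and cs: "\<And>z q. q \<in> polys_in S \<Longrightarrow> P q \<Longrightarrow> P (cst z * q)"
    and ad: "\<And>a b. a \<in> polys_in S \<Longrightarrow> b \<in> polys_in S \<Longrightarrow> P a \<Longrightarrow> P b \<Longrightarrow> P (a + b)"
    and mu: "\<And>a b. a \<in> polys_in S \<Longrightarrow> b \<in> polys_in S \<Longrightarrow> P a \<Longrightarrow> P b \<Longrightarrow> P (a * b)"
  shows "P p"
proof -
  define Q where "Q x \<longleftrightarrow> x \<in> polys_in S \<and> P x" for x
  have Q1: "Q 1" using one by (simp add: Q_def)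
  have Qmu: "Q (a * b)" if "Q a" "Q b" for a b
    using that mu polys_in_mult by (auto simp: Q_def)
  have Qad: "Q (a + b)" if "Q a" "Q b" for a b
    using that ad polys_in_add by (auto simp: Q_def)
  have Qcs: "Q (cst z * a)" if "Q a" for a z
    using that cs polys_in_mult[OF polys_in_cst] by (auto simp: Q_def)
  have Q0: "Q 0"
  proof -
    have "Q (cst 0 * 1)" by (rule Qcs[OF Q1])
    then show ?thesis by (simp add: cst_def)
  qed
  have Qpow: "Q (x ^ k)" if "Q x" for x k
    using that by (induction k) (auto intro: Q1 Qmu)
  have Qprod: "Q (prod f A)" if "\<And>x. x \<in> A \<Longrightarrow> Q (f x)" for f :: "var \<Rightarrow> dpoly" and A
    using that by (induction A rule: infinite_finite_induct) (auto intro: Q1 Qmu)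
  have Qsum: "Q (sum f A)" if "\<And>x. x \<in> A \<Longrightarrow> Q (f x)" for f :: "(var \<Rightarrow>\<^sub>0 nat) \<Rightarrow> dpoly" and A
    using that by (induction A rule: infinite_finite_induct) (auto intro: Q0 Qad)
  have Qmon: "Q (Poly_Mapping.single m 1)" if "Poly_Mapping.keys m \<subseteq> S" for m
  proof -
    have sp: "Poly_Mapping.single (sum g A) (1::complex) = (\<Prod>v\<in>A. Poly_Mapping.single (g v) 1)"
      for g :: "var \<Rightarrow> var \<Rightarrow>\<^sub>0 nat" and A
    proof (induction A rule: infinite_finite_induct)
      case (insert x F)
      have "Poly_Mapping.single (g x + sum g F) (1::complex) = Poly_Mapping.single (g x) 1 * Poly_Mapping.single (sum g F) 1"
        by (simp add: mult_single)
      then show ?case using insert by simp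
    qed auto
    have "Poly_Mapping.single m (1::complex) = (\<Prod>v\<in>Poly_Mapping.keys m. Var v ^ Poly_Mapping.lookup m v)"
      by (subst sum_singles[of m]) (simp add: sp single_single_pow)
    moreover have "Q (Var v ^ Poly_Mapping.lookup m v)" if "v \<in> Poly_Mapping.keys m" for v
    proof (rule Qpow)
      have "v \<in> S" using that \<open>Poly_Mapping.keys m \<subseteq> S\<close> by blast
      then show "Q (Var v)" using var polys_in_Var by (simp add: Q_def)
    qed
    ultimately show ?thesis by (auto intro: Qprod)
  qed
  have "Q p"
  proof (subst sum_singles[of p], rule Qsum)
    fix m assume m: "m \<in> Poly_Mapping.keys p"
    have "Poly_Mapping.single m (Poly_Mapping.lookup p m) = cst (Poly_Mapping.lookup p m) * Poly_Mapping.single m 1"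
      by (simp add: cst_def mult_single)
    moreover have "Q (Poly_Mapping.single m 1)" using m p by (auto intro: Qmon simp: polys_in_iff)
    ultimately show "Q (Poly_Mapping.single m (Poly_Mapping.lookup p m))" by (auto intro: Qcs)
  qed
  then show ?thesis by (simp add: Q_def)
qed

lemma WT_dd: "a \<in> WT \<Longrightarrow> dd a \<in> WT"
  unfolding WT_def by (rule polys_in_dd) (auto elim!: dvar.elims)
lemma WA_dd: "a \<in> WA n \<Longrightarrow> dd a \<in> WA n"
  unfolding WA_def by (rule polys_in_dd) (auto elim!: dvar.elims)

lemma WA_sub_WT: "WA n \<subseteq> WT"
  unfolding WA_def WT_def polys_in_def by blast

lemma Pr_WA: "a \<in> WT \<Longrightarrow> PrPV n a \<in> WA n"
  unfolding WT_def WA_def polys_in_iff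
proof (intro ballI subsetI)
  fix mon x
  assume a: "\<forall>mon\<in>Poly_Mapping.keys a. Poly_Mapping.keys mon \<subseteq> {U i m |i m. True}"
    and mon: "mon \<in> Poly_Mapping.keys (PrPV n a)" and x: "x \<in> Poly_Mapping.keys mon"
  have g: "goodn n mon" and m: "mon \<in> Poly_Mapping.keys a" using mon by (auto simp: in_keys_iff Pr_lookup split: if_splits)
  from a m x obtain i k where "x = U i k" by blast
  then show "x \<in> {U i m |i m. i < n}" using g x by (auto simp: goodn_def)
qed

lemma Pr_id: "a \<in> WA n \<Longrightarrow> PrPV n a = a"
proof (rule poly_mapping_eqI)
  fix mon assume a: "a \<in> WA n"
  show "Poly_Mapping.lookup (PrPV n a) mon = Poly_Mapping.lookup a mon"
  proof (cases "mon \<in> Poly_Mapping.keys a")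
    case True
    then have "goodn n mon" using a by (auto simp: WA_def polys_in_iff goodn_def)
    then show ?thesis by (simp add: Pr_lookup)
  next
    case False then show ?thesis by (simp add: Pr_lookup in_keys_iff)
  qed
qed

lemma Pr_image: "PrPV n ` WT = WA n"
proof
  show "PrPV n ` WT \<subseteq> WA n" using Pr_WA by blast
  show "WA n \<subseteq> PrPV n ` WT"
  proof
    fix x assume "x \<in> WA n"
    then have "x = PrPV n x" "x \<in> WT" using Pr_id WA_sub_WT by auto
    then show "x \<in> PrPV n ` WT" by blast
  qed
qed

lemma Pr_Var_U: "PrPV n (Var (U i k)) = (if i < n then Var (U i k) else 0)"
  by (auto simp: Var_def Pr_single goodn_def)

lemma Pr_Var_F: "PrPV n (Var (F k)) = Var (F k)"
  by (auto simp: Var_def Pr_single goodn_def)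


definition vb :: "int \<Rightarrow> (int \<Rightarrow> 'a::zero) \<Rightarrow> bool" where
  "vb N A \<longleftrightarrow> (\<forall>k>N. A k = 0)"

definition smulB :: "int \<Rightarrow> int \<Rightarrow> ('a \<Rightarrow> 'a) \<Rightarrow> (int \<Rightarrow> 'a::comm_ring_1) \<Rightarrow> (int \<Rightarrow> 'a) \<Rightarrow> int \<Rightarrow> 'a" where
  "smulB NA NB d A B p = (\<Sum>k\<in>{p - NB..NA}. \<Sum>j\<in>{0..nat (NA + NB - p)}.
       of_int (ibinom k j) * A k * (d ^^ j) (B (p + int j - k)))"

lemma funpow_zero: fixes d :: "'a::zero \<Rightarrow> 'a" shows "d 0 = 0 \<Longrightarrow> (d ^^ j) 0 = 0"
  by (induction j) auto

lemma smulB_mono: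
  fixes d :: "'a::comm_ring_1 \<Rightarrow> 'a"
  assumes A: "vb NA A" and B: "vb NB B" and le: "NA \<le> NA'" "NB \<le> NB'" and d: "d 0 = 0"
  shows "smulB NA NB d A B p = smulB NA' NB' d A B p"
proof -
  let ?g = "\<lambda>(k, j). of_int (ibinom k j) * A k * (d ^^ j) (B (p + int j - k))"
  have "smulB NA NB d A B p = sum ?g ({p - NB..NA} \<times> {0..nat (NA + NB - p)})"
    unfolding smulB_def by (simp add: sum.cartesian_product)
  also have "\<dots> = sum ?g ({p - NB'..NA'} \<times> {0..nat (NA' + NB' - p)})"
  proof (rule sum.mono_neutral_left)
    show "finite ({p - NB'..NA'} \<times> {0..nat (NA' + NB' - p)})" by simp
    show "{p - NB..NA} \<times> {0..nat (NA + NB - p)} \<subseteq> {p - NB'..NA'} \<times> {0..nat (NA' + NB' - p)}"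
      using le by auto
    show "\<forall>x\<in>{p - NB'..NA'} \<times> {0..nat (NA' + NB' - p)} - {p - NB..NA} \<times> {0..nat (NA + NB - p)}. ?g x = 0"
    proof
      fix x assume x: "x \<in> {p - NB'..NA'} \<times> {0..nat (NA' + NB' - p)} - {p - NB..NA} \<times> {0..nat (NA + NB - p)}"
      obtain k j where kj: "x = (k, j)" by force
      show "?g x = 0"
      proof (cases "k > NA")
        case True then show ?thesis using A kj by (simp add: vb_def)
      next
        case False
        then have "p + int j - k > NB" using x kj by auto
        then show ?thesis using B kj funpow_zero[of d, OF d] by (simp add: vb_def)
      qed
    qed
  qed
  also have "\<dots> = smulB NA' NB' d A B p"
    unfolding smulB_def by (simp add: sum.cartesian_product)
  finally show ?thesis .
qed

lemma vb_sbound: "vb N A \<Longrightarrow> vb (sbound A) A"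
  unfolding vb_def sbound_def by (rule someI_ex) blast

lemma smul_eq:
  fixes d :: "'a::comm_ring_1 \<Rightarrow> 'a"
  assumes A: "vb NA A" and B: "vb NB B" and d: "d 0 = 0"
  shows "smul d A B p = smulB NA NB d A B p"
proof -
  have A': "vb (sbound A) A" and B': "vb (sbound B) B" using A B vb_sbound by auto
  have "smul d A B p = smulB (sbound A) (sbound B) d A B p"
    by (simp add: smul_def smulB_def)
  also have "\<dots> = smulB (max NA (sbound A)) (max NB (sbound B)) d A B p"
    by (rule smulB_mono[where d=d, OF A' B' _ _ d]) auto
  also have "\<dots> = smulB NA NB d A B p"
    by (rule smulB_mono[where d=d, OF A B _ _ d, symmetric]) auto
  finally show ?thesis .
qed

lemma vb_smulB: "vb (NA + NB) (smulB NA NB d A B)"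
  unfolding vb_def smulB_def by auto

lemma vb_smul: fixes d :: "'a::comm_ring_1 \<Rightarrow> 'a" shows "vb NA A \<Longrightarrow> vb NB B \<Longrightarrow> d 0 = 0 \<Longrightarrow> vb (NA + NB) (smul d A B)"
  using vb_smulB[of NA NB d A B] smul_eq[of NA A NB B d] by (simp add: vb_def)

lemma vb_mono: "vb N A \<Longrightarrow> N \<le> M \<Longrightarrow> vb M A"
  by (simp add: vb_def)

lemma is_symbol_vb: "is_symbol A \<longleftrightarrow> (\<exists>N. vb N A)"
  by (simp add: is_symbol_def vb_def)

lemma is_symbol_smul[simp]: fixes d :: "'a::comm_ring_1 \<Rightarrow> 'a" shows "is_symbol A \<Longrightarrow> is_symbol B \<Longrightarrow> d 0 = 0 \<Longrightarrow> is_symbol (smul d A B)"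
  using vb_smul unfolding is_symbol_vb by blast

lemma vb_splus: "vb N A \<Longrightarrow> vb N (splus A)"
  by (simp add: vb_def splus_def)
lemma is_symbol_splus[simp]: "is_symbol A \<Longrightarrow> is_symbol (splus A)"
  using vb_splus unfolding is_symbol_vb by blast
lemma vb_diff: "vb N (A::int\<Rightarrow>'a::group_add) \<Longrightarrow> vb N B \<Longrightarrow> vb N (A - B)"
  by (simp add: vb_def)
lemma is_symbol_diff[simp]: "is_symbol (A::int \<Rightarrow> 'a::ab_group_add) \<Longrightarrow> is_symbol B \<Longrightarrow> is_symbol (A - B)"
  unfolding is_symbol_vb by (metis vb_diff vb_mono max.cobounded1 max.cobounded2)
lemma vb_spow: "vb i (spow i)"
  by (simp add: vb_def spow_def)
lemma is_symbol_spow[simp]: "is_symbol (spow i)"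
  using vb_spow unfolding is_symbol_vb by blast
lemma vb_sconst: "vb 0 (sconst f)"
  by (simp add: vb_def sconst_def)
lemma is_symbol_sconst[simp]: "is_symbol (sconst f)"
  using vb_sconst unfolding is_symbol_vb by blast
lemma vb_monic: "vb (int n) (monic_sym n w)"
  by (simp add: vb_def monic_sym_def)
lemma is_symbol_monic[simp]: "is_symbol (monic_sym n w)"
  using vb_monic unfolding is_symbol_vb by blast

lemma dd_zero': "dd 0 = 0" by simp

lemma Pr_of_int: "PrPV n (of_int z) = of_int z"
  by (simp add: single_of_int[symmetric] Pr_single del: single_of_int)

lemma Pr_funpow: "PrPV n ((dd ^^ j) x) = (dd ^^ j) (PrPV n x)"
  by (induction j) (auto simp: Pr_dd)

lemma Pr_smulB: "PrPV n (smulB NA NB dd A B p) = smulB NA NB dd (PrPV n \<circ> A) (PrPV n \<circ> B) p"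
  unfolding smulB_def by (simp add: Pr_sum Pr_mult Pr_of_int Pr_funpow)

lemma vb_Pr: "vb N A \<Longrightarrow> vb N (PrPV n \<circ> A)"
  by (simp add: vb_def)

lemma Pr_smul:
  assumes "is_symbol A" "is_symbol B"
  shows "PrPV n \<circ> smul dd A B = smul dd (PrPV n \<circ> A) (PrPV n \<circ> B)"
proof
  fix p
  obtain NA NB where A: "vb NA A" and B: "vb NB B" using assms unfolding is_symbol_vb by blast
  show "(PrPV n \<circ> smul dd A B) p = smul dd (PrPV n \<circ> A) (PrPV n \<circ> B) p"
    using smul_eq[where d=dd, OF A B dd_zero'] smul_eq[where d=dd, OF vb_Pr[OF A] vb_Pr[OF B] dd_zero'] Pr_smulB by simp
qed

lemma Pr_spow[simp]: "PrPV n \<circ> spow i = spow i"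
  by (auto simp: spow_def)
lemma Pr_sconst[simp]: "PrPV n \<circ> sconst f = sconst (PrPV n f)"
  by (auto simp: sconst_def)
lemma Pr_splus[simp]: "PrPV n \<circ> splus X = splus (PrPV n \<circ> X)"
  by (auto simp: splus_def)
lemma Pr_fdiff[simp]: "PrPV n \<circ> (X - Y) = (PrPV n \<circ> X) - (PrPV n \<circ> Y)"
  by (auto simp: Pr_diff)

lemma Hop_Pr:
  assumes L: "is_symbol L"
  shows "PrPV n (Hop L i j f) = Hop (PrPV n \<circ> L) i j (PrPV n f)"
proof -
  have "PrPV n (Hop L i j f) = (PrPV n \<circ> smul dd
      (smul dd (splus (smul dd (smul dd L (spow i)) (sconst f))) L
       - smul dd L (splus (smul dd (smul dd (spow i) (sconst f)) L)))
      (spow j)) (-1)"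
    by (simp add: Hop_def sres_def)
  also have "\<dots> = Hop (PrPV n \<circ> L) i j (PrPV n f)"
    using L by (simp add: Pr_smul Hop_def sres_def)
  finally show ?thesis .
qed


definition noF :: "(var \<Rightarrow>\<^sub>0 nat) \<Rightarrow> bool" where
  "noF mon \<longleftrightarrow> (\<forall>k. F k \<notin> Poly_Mapping.keys mon)"

lemma fcoeff_lookup:
  "Poly_Mapping.lookup (fcoeff m X) mon =
     (if noF mon then Poly_Mapping.lookup X (mon + Poly_Mapping.single (F m) 1) else 0)"
proof -
  let ?f = "\<lambda>mon. if (\<forall>k. F k \<notin> Poly_Mapping.keys mon)
      then Poly_Mapping.lookup X (mon + Poly_Mapping.single (F m) 1) else 0"
  have "{mon. ?f mon \<noteq> 0} \<subseteq> (\<lambda>k. k - Poly_Mapping.single (F m) 1) ` Poly_Mapping.keys X"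
  proof
    fix mon assume "mon \<in> {mon. ?f mon \<noteq> 0}"
    then have "mon + Poly_Mapping.single (F m) 1 \<in> Poly_Mapping.keys X"
      by (auto simp: in_keys_iff split: if_splits)
    moreover have "mon = (mon + Poly_Mapping.single (F m) 1) - Poly_Mapping.single (F m) 1" by simp
    ultimately show "mon \<in> (\<lambda>k. k - Poly_Mapping.single (F m) 1) ` Poly_Mapping.keys X" by blast
  qed
  then have "finite {mon. ?f mon \<noteq> 0}" by (rule finite_subset) simp
  then show ?thesis unfolding fcoeff_def noF_def by simp
qed

lemma goodn_single_F[simp]: "goodn n (Poly_Mapping.single (F m) c)"
  by (simp add: goodn_def)

lemma Pr_fcoeff: "PrPV n (fcoeff m X) = fcoeff m (PrPV n X)"
  by (rule poly_mapping_eqI) (simp add: fcoeff_lookup Pr_lookup)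

lemma fcoeff_notin: "m \<notin> Fords X \<Longrightarrow> fcoeff m X = 0"
proof (rule poly_mapping_eqI)
  fix mon :: "var \<Rightarrow>\<^sub>0 nat" assume m: "m \<notin> Fords X"
  have "F m \<in> Poly_Mapping.keys (mon + Poly_Mapping.single (F m) 1)"
    by (simp add: in_keys_iff lookup_add)
  then have "mon + Poly_Mapping.single (F m) 1 \<notin> Poly_Mapping.keys X"
    using m by (auto simp: Fords_def)
  then show "Poly_Mapping.lookup (fcoeff m X) mon = Poly_Mapping.lookup 0 mon"
    by (simp add: fcoeff_lookup in_keys_iff)
qed

lemma finite_Fords: "finite (Fords X)"
proof -
  have "Fords X = (\<Union>mon\<in>Poly_Mapping.keys X. F -` Poly_Mapping.keys mon)"
    by (auto simp: Fords_def)
  moreover have "finite (F -` Poly_Mapping.keys mon)" for mon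
    by (rule finite_vimageI) (auto simp: inj_def)
  ultimately show ?thesis by auto
qed

lemma Fords_Pr: "Fords (PrPV n X) \<subseteq> Fords X"
  by (auto simp: Fords_def in_keys_iff Pr_lookup split: if_splits)

lemma map_poly_Pr_sum: "map_poly (PrPV n) (sum g A) = (\<Sum>x\<in>A. map_poly (PrPV n) (g x))"
  by (rule poly_eqI) (simp add: coeff_map_poly coeff_sum Pr_sum)

lemma Hsym_Pr:
  assumes L: "is_symbol L"
  shows "map_poly (PrPV n) (Hsym L i j) = Hsym (PrPV n \<circ> L) i j"
proof -
  define X where "X = Hop L i j (Var (F 0))"
  have Y: "Hop (PrPV n \<circ> L) i j (Var (F 0)) = PrPV n X"
    unfolding X_def using Hop_Pr[OF L] Pr_Var_F by metis
  have "map_poly (PrPV n) (Hsym L i j) = (\<Sum>m\<in>Fords X. monom (fcoeff m (PrPV n X)) m)"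
    by (simp add: Hsym_def Let_def X_def[symmetric] map_poly_Pr_sum map_poly_monom Pr_fcoeff)
  also have "\<dots> = (\<Sum>m\<in>Fords (PrPV n X). monom (fcoeff m (PrPV n X)) m)"
    by (rule sum.mono_neutral_right) (auto simp: finite_Fords Fords_Pr fcoeff_notin)
  also have "\<dots> = Hsym (PrPV n \<circ> L) i j"
    by (simp add: Hsym_def Y Let_def)
  finally show ?thesis .
qed

lemma Pr_monic: "PrPV n \<circ> monic_sym n wT = monic_sym n (wA n)"
proof
  fix k
  show "(PrPV n \<circ> monic_sym n wT) k = monic_sym n (wA n) k"
    by (auto simp: monic_sym_def wT_def wA_def Pr_Var_U)
qed

lemma smulB_agree:
  assumes "\<forall>k\<ge>\<alpha>. A k = A' k" "\<forall>m\<ge>\<beta>. B m = B' m" "\<alpha> + NB \<le> p" "\<beta> + NA \<le> p"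
  shows "smulB NA NB d A B p = smulB NA NB d A' B' p"
  unfolding smulB_def using assms by (intro sum.cong refl) auto

lemma smul_agree:
  fixes d :: "'a::comm_ring_1 \<Rightarrow> 'a"
  assumes "vb NA A" "vb NA A'" "vb NB B" "vb NB B'" "d 0 = 0"
    "\<forall>k\<ge>\<alpha>. A k = A' k" "\<forall>m\<ge>\<beta>. B m = B' m" "\<alpha> + NB \<le> p" "\<beta> + NA \<le> p"
  shows "smul d A B p = smul d A' B' p"
  using smul_eq[where d=d, OF assms(1,3,5)] smul_eq[where d=d, OF assms(2,4,5)] smulB_agree[OF assms(6-9)]
  by simp


lemma Hop_local:
  assumes L: "vb N L" and L': "vb N L'" and agr: "\<forall>k\<ge>0. L k = L' k"
    and i: "i \<le> 0" and ij: "N + i + j \<le> -1"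
  shows "Hop L i j f = Hop L' i j f"
proof -
  have d0: "dd 0 = 0" by simp
  define X1 where "X1 l = smul dd l (spow i)" for l :: "int \<Rightarrow> dpoly"
  define X2 where "X2 l = smul dd (X1 l) (sconst f)" for l
  define Z where "Z = smul dd (spow i) (sconst f)"
  define A where "A l = smul dd (splus (X2 l)) l" for l
  define B where "B l = smul dd l (splus (smul dd Z l))" for l
  have H: "Hop l i j f = smul dd (A l - B l) (spow j) (-1)" for l
    by (simp add: Hop_def sres_def A_def B_def X2_def X1_def Z_def)
  have vX1: "vb (N + i) (X1 l)" if "vb N l" for l
    unfolding X1_def by (rule vb_smul[where d=dd, OF that vb_spow d0])
  have vX2: "vb (N + i + 0) (X2 l)" if "vb N l" for l
    unfolding X2_def by (rule vb_smul[where d=dd, OF vX1[OF that] vb_sconst d0])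
  have vZ: "vb (i + 0) Z" unfolding Z_def by (rule vb_smul[where d=dd, OF vb_spow vb_sconst d0])
  have vA: "vb (N + i + 0 + N) (A l)" if "vb N l" for l
    unfolding A_def by (rule vb_smul[where d=dd, OF vb_splus[OF vX2[OF that]] that d0])
  have vB: "vb (N + (i + 0 + N)) (B l)" if "vb N l" for l
    unfolding B_def by (rule vb_smul[where d=dd, OF that vb_splus[OF vb_smul[where d=dd, OF vZ that d0]] d0])
  have vD: "vb (2 * N + i) (A l - B l)" if "vb N l" for l
    by (rule vb_diff; rule vb_mono) (use vA[OF that] vB[OF that] in auto)
  have a1: "\<forall>p\<ge>i. X1 L p = X1 L' p"
    unfolding X1_def
  proof (intro allI impI)
    fix p assume "i \<le> p"
    then show "smul dd L (spow i) p = smul dd L' (spow i) p"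
      by (intro smul_agree[where d=dd, OF L L' vb_spow vb_spow d0 agr, of "p - N"]) auto
  qed
  have a2: "\<forall>p\<ge>i. X2 L p = X2 L' p"
    unfolding X2_def
  proof (intro allI impI)
    fix p assume "i \<le> p"
    then show "smul dd (X1 L) (sconst f) p = smul dd (X1 L') (sconst f) p"
      by (intro smul_agree[where d=dd, OF vX1[OF L] vX1[OF L'] vb_sconst vb_sconst d0 a1, of "p - (N + i)"]) auto
  qed
  have sp: "splus (X2 L) = splus (X2 L')"
    using a2 i by (auto simp: splus_def)
  have aA: "\<forall>p\<ge>N + i. A L p = A L' p"
    unfolding A_def sp
  proof (intro allI impI)
    fix p assume "N + i \<le> p"
    then show "smul dd (splus (X2 L')) L p = smul dd (splus (X2 L')) L' p"
      by (intro smul_agree[where d=dd, OF vb_splus[OF vX2[OF L']] vb_splus[OF vX2[OF L']] L L' d0 _ agr, of "p - N"]) auto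
  qed
  have aW: "\<forall>p\<ge>i. smul dd Z L p = smul dd Z L' p"
  proof (intro allI impI)
    fix p assume "i \<le> p"
    then show "smul dd Z L p = smul dd Z L' p"
      by (intro smul_agree[where d=dd, OF vZ vZ L L' d0 _ agr, of "p - N"]) auto
  qed
  have sq: "splus (smul dd Z L) = splus (smul dd Z L')"
    using aW i by (auto simp: splus_def)
  have aB: "\<forall>p\<ge>N + i. B L p = B L' p"
    unfolding B_def sq
  proof (intro allI impI)
    fix p assume "N + i \<le> p"
    then show "smul dd L (splus (smul dd Z L')) p = smul dd L' (splus (smul dd Z L')) p"
      by (intro smul_agree[where d=dd, OF L L' vb_splus[OF vb_smul[where d=dd, OF vZ L' d0]] vb_splus[OF vb_smul[where d=dd, OF vZ L' d0]] d0 agr, of "p - N"]) auto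
  qed
  have aD: "\<forall>p\<ge>N + i. (A L - B L) p = (A L' - B L') p"
    using aA aB by simp
  have "smul dd (A L - B L) (spow j) (-1) = smul dd (A L' - B L') (spow j) (-1)"
    by (rule smul_agree[where d=dd, OF vD[OF L] vD[OF L'] vb_spow vb_spow d0 aD, of "-1 - (2 * N + i)"]) (use ij in auto)
  then show ?thesis by (simp add: H)
qed


lemma mpP_add: "map_poly (PrPV n) (P + Q) = map_poly (PrPV n) P + map_poly (PrPV n) Q"
  by (rule poly_eqI) (simp add: coeff_map_poly Pr_add)
lemma mpP_uminus: "map_poly (PrPV n) (- P) = - map_poly (PrPV n) P"
  by (rule poly_eqI) (simp add: coeff_map_poly Pr_uminus)
lemma mpP_smult: "map_poly (PrPV n) (smult c P) = smult (PrPV n c) (map_poly (PrPV n) P)"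
  by (rule map_poly_smult) (auto simp: Pr_mult)
lemma mpP_lpd: "map_poly (PrPV n) (lpd P) = lpd (map_poly (PrPV n) P)"
  by (rule poly_eqI) (simp add: lpd_def coeff_map_poly Pr_add Pr_dd coeff_pCons split: nat.splits)
lemma mpP_nlpd: "map_poly (PrPV n) (nlpd P) = nlpd (map_poly (PrPV n) P)"
  by (simp add: nlpd_def mpP_uminus mpP_lpd)
lemma mpP_nlpd_pow: "map_poly (PrPV n) ((nlpd ^^ k) P) = (nlpd ^^ k) (map_poly (PrPV n) P)"
  by (induction k) (auto simp: mpP_nlpd)

lemma nlpd_zero[simp]: "nlpd 0 = 0"
  by (simp add: nlpd_def lpd_def)
lemma nlpd_pow_zero[simp]: "(nlpd ^^ k) 0 = 0"
  by (induction k) auto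

lemma skew_sub_D: "degree P \<le> D \<Longrightarrow> skew_sub P = (\<Sum>k\<le>D. (nlpd ^^ k) [:coeff P k:])"
  unfolding skew_sub_def
  by (rule sum.mono_neutral_left) (auto simp: coeff_eq_0)

lemma mpP_skew: "map_poly (PrPV n) (skew_sub P) = skew_sub (map_poly (PrPV n) P)"
proof -
  have dg: "degree (map_poly (PrPV n) P) \<le> degree P" by (rule map_poly_degree_leq)
  have "map_poly (PrPV n) (skew_sub P) = (\<Sum>k\<le>degree P. (nlpd ^^ k) [:PrPV n (coeff P k):])"
    by (simp add: skew_sub_def map_poly_Pr_sum mpP_nlpd_pow map_poly_pCons)
  also have "\<dots> = skew_sub (map_poly (PrPV n) P)"
    by (simp add: skew_sub_D[OF dg] coeff_map_poly)
  finally show ?thesis .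
qed

lemma PVA_closed_ax: assumes "is_PVA S br" shows "\<forall>a\<in>S. \<forall>b\<in>S. \<forall>k. coeff (br a b) k \<in> S"
  using assms unfolding is_PVA_def by (elim conjE) assumption

lemma PVA_radd_ax: assumes "is_PVA S br" shows "\<forall>a\<in>S. \<forall>b\<in>S. \<forall>c\<in>S. br a (b + c) = br a b + br a c"
  using assms unfolding is_PVA_def by (elim conjE) assumption

lemma PVA_rcst_ax: assumes "is_PVA S br" shows "\<forall>a\<in>S. \<forall>b\<in>S. \<forall>z. br a (cst z * b) = smult (cst z) (br a b)"
  using assms unfolding is_PVA_def by (elim conjE) assumption

lemma PVA_rdd_ax: assumes "is_PVA S br" shows "\<forall>a\<in>S. \<forall>b\<in>S. br a (dd b) = lpd (br a b)"
  using assms unfolding is_PVA_def by (elim conjE) assumption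

lemma PVA_rmul_ax: assumes "is_PVA S br" shows "\<forall>a\<in>S. \<forall>b\<in>S. \<forall>c\<in>S. br a (b * c) = smult c (br a b) + smult b (br a c)"
  using assms unfolding is_PVA_def by (elim conjE) assumption

lemma PVA_skew_ax: assumes "is_PVA S br" shows "\<forall>a\<in>S. \<forall>b\<in>S. br b a = - skew_sub (br a b)"
  using assms unfolding is_PVA_def by (elim conjE) assumption

lemma PVA_radd: "is_PVA S br \<Longrightarrow> a \<in> S \<Longrightarrow> b \<in> S \<Longrightarrow> c \<in> S \<Longrightarrow> br a (b + c) = br a b + br a c"
  using PVA_radd_ax by blast
lemma PVA_rcst: "is_PVA S br \<Longrightarrow> a \<in> S \<Longrightarrow> b \<in> S \<Longrightarrow> br a (cst z * b) = smult (cst z) (br a b)"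
  using PVA_rcst_ax by blast
lemma PVA_rdd: "is_PVA S br \<Longrightarrow> a \<in> S \<Longrightarrow> b \<in> S \<Longrightarrow> br a (dd b) = lpd (br a b)"
  using PVA_rdd_ax by blast
lemma PVA_rmul: "is_PVA S br \<Longrightarrow> a \<in> S \<Longrightarrow> b \<in> S \<Longrightarrow> c \<in> S \<Longrightarrow> br a (b * c) = smult c (br a b) + smult b (br a c)"
  using PVA_rmul_ax by blast
lemma PVA_skew: "is_PVA S br \<Longrightarrow> a \<in> S \<Longrightarrow> b \<in> S \<Longrightarrow> br b a = - skew_sub (br a b)"
  using PVA_skew_ax by blast

lemma PVA_right_one:
  assumes "is_PVA S br" "a \<in> S" "1 \<in> S"
  shows "br a 1 = 0"
proof -
  have "br a (1 * 1) = smult 1 (br a 1) + smult 1 (br a 1)"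
    using PVA_rmul[OF assms(1,2,3,3)] .
  then show ?thesis by simp
qed

lemma WT_one: "1 \<in> WT" by (simp add: WT_def)
lemma WA_one: "1 \<in> WA n" by (simp add: WA_def)
lemma WT_Var: "Var (U i m) \<in> WT" by (auto simp: WT_def intro: polys_in_Var)
lemma WT_mult: "a \<in> WT \<Longrightarrow> b \<in> WT \<Longrightarrow> a * b \<in> WT" by (simp add: WT_def polys_in_mult)
lemma WA_mult: "a \<in> WA n \<Longrightarrow> b \<in> WA n \<Longrightarrow> a * b \<in> WA n" by (simp add: WA_def polys_in_mult)
lemma WT_cst: "cst z \<in> WT" by (simp add: WT_def)
lemma WA_cst: "cst z \<in> WA n" by (simp add: WA_def)

lemma right_ind:
  assumes T: "is_PVA WT bT" and A: "is_PVA (WA n) bA" and a: "a \<in> WT"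
    and base: "\<And>i. map_poly (PrPV n) (bT a (Var (U i 0))) = bA (PrPV n a) (PrPV n (Var (U i 0)))"
    and b: "b \<in> WT"
  shows "map_poly (PrPV n) (bT a b) = bA (PrPV n a) (PrPV n b)"
proof -
  have Pa: "PrPV n a \<in> WA n" using a by (rule Pr_WA)
  have b': "b \<in> polys_in {U i m | i m. True}" using b by (simp add: WT_def)
  show ?thesis using b'
  proof (induction rule: polys_in_induct)
    case one
    show ?case using PVA_right_one[OF T a WT_one] PVA_right_one[OF A Pa WA_one] by simp
  next
    case (Var v)
    then obtain i m where v: "v = U i m" by blast
    have "map_poly (PrPV n) (bT a (Var (U i m))) = bA (PrPV n a) (PrPV n (Var (U i m)))"
    proof (induction m)
      case 0 then show ?case by (rule base)
    next
      case (Suc m)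
      have e: "Var (U i (Suc m)) = dd (Var (U i m))" by (simp add: dd_Var)
      have "map_poly (PrPV n) (bT a (Var (U i (Suc m)))) = lpd (map_poly (PrPV n) (bT a (Var (U i m))))"
        unfolding e by (simp add: PVA_rdd[OF T a WT_Var] mpP_lpd)
      also have "\<dots> = lpd (bA (PrPV n a) (PrPV n (Var (U i m))))" by (simp add: Suc)
      also have "\<dots> = bA (PrPV n a) (dd (PrPV n (Var (U i m))))"
        by (simp add: PVA_rdd[OF A Pa Pr_WA[OF WT_Var]])
      finally show ?case by (simp add: e Pr_dd)
    qed
    then show ?case by (simp add: v)
  next
    case (cst z q)
    have q: "q \<in> WT" using cst by (simp add: WT_def)
    have "bT a (cst z * q) = smult (cst z) (bT a q)" using PVA_rcst[OF T a q] .
    moreover have "bA (PrPV n a) (cst z * PrPV n q) = smult (cst z) (bA (PrPV n a) (PrPV n q))"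
      using PVA_rcst[OF A Pa Pr_WA[OF q]] .
    ultimately show ?case using cst by (simp add: mpP_smult Pr_mult)
  next
    case (add x y)
    have x: "x \<in> WT" and y: "y \<in> WT" using add by (auto simp: WT_def)
    have "bT a (x + y) = bT a x + bT a y" using PVA_radd[OF T a x y] .
    moreover have "bA (PrPV n a) (PrPV n x + PrPV n y) = bA (PrPV n a) (PrPV n x) + bA (PrPV n a) (PrPV n y)"
      using PVA_radd[OF A Pa Pr_WA[OF x] Pr_WA[OF y]] .
    ultimately show ?case using add by (simp add: mpP_add Pr_add)
  next
    case (mult x y)
    have x: "x \<in> WT" and y: "y \<in> WT" using mult by (auto simp: WT_def)
    have "bT a (x * y) = smult y (bT a x) + smult x (bT a y)" using PVA_rmul[OF T a x y] .
    moreover have "bA (PrPV n a) (PrPV n x * PrPV n y) = smult (PrPV n y) (bA (PrPV n a) (PrPV n x)) + smult (PrPV n x) (bA (PrPV n a) (PrPV n y))"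
      using PVA_rmul[OF A Pa Pr_WA[OF x] Pr_WA[OF y]] .
    ultimately show ?case using mult by (simp add: mpP_add mpP_smult Pr_mult)
  qed
qed


lemma wA_Pr: "PrPV n (Var (U i 0)) = wA n i"
  by (simp add: Pr_Var_U wA_def)

lemma gen_case:
  assumes T: "adler_type bT n wT" and A: "adler_type bA n (wA n)"
  shows "map_poly (PrPV n) (bT (Var (U i 0)) (Var (U j 0))) = bA (PrPV n (Var (U i 0))) (PrPV n (Var (U j 0)))"
proof -
  have "bT (Var (U i 0)) (Var (U j 0)) = Hsym (monic_sym n wT) (int j - int n) (int i - int n)"
    using T unfolding adler_type_def wT_def by blast
  then have "map_poly (PrPV n) (bT (Var (U i 0)) (Var (U j 0))) = Hsym (monic_sym n (wA n)) (int j - int n) (int i - int n)"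
    by (simp add: Hsym_Pr Pr_monic)
  also have "\<dots> = bA (wA n i) (wA n j)"
    using A unfolding adler_type_def by simp
  finally show ?thesis by (simp add: wA_Pr)
qed

lemma bracket_hom:
  assumes PT: "is_PVA WT bT" and AT: "adler_type bT n wT"
    and PA: "is_PVA (WA n) bA" and AA: "adler_type bA n (wA n)"
    and a: "a \<in> WT" and b: "b \<in> WT"
  shows "map_poly (PrPV n) (bT a b) = bA (PrPV n a) (PrPV n b)"
proof -
  have s1: "map_poly (PrPV n) (bT (Var (U i 0)) c) = bA (PrPV n (Var (U i 0))) (PrPV n c)" if c: "c \<in> WT" for i c
    by (rule right_ind[OF PT PA WT_Var gen_case[OF AT AA] c])
  have s2: "map_poly (PrPV n) (bT c (Var (U i 0))) = bA (PrPV n c) (PrPV n (Var (U i 0)))" if c: "c \<in> WT" for i c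
  proof -
    have "map_poly (PrPV n) (bT c (Var (U i 0))) = - skew_sub (map_poly (PrPV n) (bT (Var (U i 0)) c))"
      by (simp add: PVA_skew[OF PT WT_Var c] mpP_uminus mpP_skew)
    also have "\<dots> = - skew_sub (bA (PrPV n (Var (U i 0))) (PrPV n c))" by (simp add: s1[OF c])
    also have "\<dots> = bA (PrPV n c) (PrPV n (Var (U i 0)))"
      by (rule PVA_skew[OF PA Pr_WA[OF WT_Var] Pr_WA[OF c], symmetric])
    finally show ?thesis .
  qed
  show ?thesis by (rule right_ind[OF PT PA a s2[OF a] b])
qed

lemma monic_agree: "\<forall>k\<ge>0. monic_sym n wT k = monic_sym n (wA n) k"
  by (auto simp: monic_sym_def wT_def wA_def)

theorem mainTheorem18:
  fixes brT brA :: "nat \<Rightarrow> dpoly \<Rightarrow> dpoly \<Rightarrow> dpoly poly"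
  assumes T: "\<And>n. n > 0 \<Longrightarrow> is_PVA WT (brT n) \<and> adler_type (brT n) n wT"
      and A: "\<And>n. n > 0 \<Longrightarrow> is_PVA (WA n) (brA n) \<and> adler_type (brA n) n (wA n)"
  shows "(\<forall>n>0.
            PrPV n ` WT = WA n \<and>
            PrPV n 1 = 1 \<and>
            (\<forall>a\<in>WT. \<forall>b\<in>WT. PrPV n (a + b) = PrPV n a + PrPV n b \<and>
                             PrPV n (a * b) = PrPV n a * PrPV n b) \<and>
            (\<forall>z. PrPV n (cst z) = cst z) \<and>
            (\<forall>a\<in>WT. PrPV n (dd a) = dd (PrPV n a)) \<and>
            (\<forall>a\<in>WT. \<forall>b\<in>WT. map_poly (PrPV n) (brT n a b) = brA n (PrPV n a) (PrPV n b)))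
       \<and> (\<forall>i0 j0. \<exists>N. \<forall>n\<ge>N.
            map_poly (InvPV n) (brA n (Var (U i0 0)) (Var (U j0 0)))
              = brT n (Var (U i0 0)) (Var (U j0 0)))"
proof (intro conjI allI impI ballI)
  fix n :: nat assume n: "n > 0"
  show "PrPV n ` WT = WA n" by (rule Pr_image)
  show "PrPV n 1 = 1" by simp
  fix z show "PrPV n (cst z) = cst z" by simp
next
  fix n :: nat and a b assume "n > 0"
  show "PrPV n (a + b) = PrPV n a + PrPV n b" by (rule Pr_add)
  show "PrPV n (a * b) = PrPV n a * PrPV n b" by (rule Pr_mult)
next
  fix n :: nat and a assume "n > 0"
  show "PrPV n (dd a) = dd (PrPV n a)" by (rule Pr_dd)
next
  fix n :: nat and a b assume n: "n > 0" and a: "a \<in> WT" and b: "b \<in> WT"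
  show "map_poly (PrPV n) (brT n a b) = brA n (PrPV n a) (PrPV n b)"
    using bracket_hom[of "brT n" n "brA n" a b] T[OF n] A[OF n] a b by blast
next
  fix i0 j0 :: nat
  show "\<exists>N. \<forall>n\<ge>N. map_poly (InvPV n) (brA n (Var (U i0 0)) (Var (U j0 0)))
              = brT n (Var (U i0 0)) (Var (U j0 0))"
  proof (intro exI allI impI)
    fix n :: nat assume nN: "i0 + j0 + 1 \<le> n"
    then have n: "n > 0" and i0: "i0 < n" and j0: "j0 < n" by auto
    have inv: "InvPV n = (\<lambda>p. p)" by (rule ext) (simp add: InvPV_def)
    have "brA n (Var (U i0 0)) (Var (U j0 0)) = brA n (wA n i0) (wA n j0)"
      using i0 j0 by (simp add: wA_def)
    also have "\<dots> = Hsym (monic_sym n (wA n)) (int j0 - int n) (int i0 - int n)"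
      using A[OF n] unfolding adler_type_def by blast
    also have "\<dots> = Hsym (monic_sym n wT) (int j0 - int n) (int i0 - int n)"
      unfolding Hsym_def
      using Hop_local[OF vb_monic vb_monic monic_agree[of n], of "int j0 - int n" "int i0 - int n"] nN
      by simp
    also have "\<dots> = brT n (wT i0) (wT j0)"
      using T[OF n] unfolding adler_type_def by simp
    finally show "map_poly (InvPV n) (brA n (Var (U i0 0)) (Var (U j0 0))) = brT n (Var (U i0 0)) (Var (U j0 0))"
      by (simp add: inv wT_def)
  qed
qed


end
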